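(* Let $g,h:\mathbb{R}\to\mathbb{R}^2$ be free maps, i.e. $g'(t),g''(t)$ are linearly independent for all $t$, and likewise for $h$. Define $F_{gh}:\mathbb{R}^2\to\mathbb{R}^4$ by $F_{gh}(x,y)=(g(x),h(y))$. Then $F_{gh}\in\mathcal{A}_{2,4}$; moreover, for $F_{gh}$ the compatibility condition of the linearized system reduces to $\partial_x h_y+\partial_y h_x=\delta g_{xy}$. In particular $F(x,y)=(x,e^x,y,e^y)$ belongs to $\mathcal{A}_{2,4}$.
   Context: Definition of $\mathcal{A}_{m,q}$ for $q=\frac{m(m+3)}{2}-1$ (here $m=2,q=4$): it is the set of smooth $f:\mathbb{R}^m\to\mathbb{R}^q$ such that (i) at every point $x$ the $\frac{m(m+3)}{2}$ vectors $\partial_\alpha f(x)$, $\partial_{\alpha\beta}f(x)$ ($\alpha\le\beta$) span $\mathbb{R}^q$ (so one may choose smooth, nowhere simultaneously vanishing functions $\lambda^\alpha$, $\lambda^{\alpha\beta}=\lambda^{\beta\alpha}$ with $\sum_\alpha\lambda^\alpha\partial_\alpha f+\sum_{\alpha,\beta}\lambda^{\alpha\beta}\partial_{\alpha\beta}f\equiv0$, unique up to a nowhere-zero factor); and (ii) there is an index $\alpha_0$ such that at every point $\lambda^{\alpha_0 1},\dots,\lambda^{\alpha_0 m}$ are not all zero. The compatibility condition of the system $\sum_i \partial_\alpha f^i\delta f^i=h_\alpha$, $\sum_i \partial_{\alpha\beta} f^i\delta f^i=\tfrac12(\partial_\alpha h_\beta+\partial_\beta h_\alpha-\delta g_{\alpha\beta})$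 is $2\sum_\alpha\lambda^\alpha h_\alpha+\sum_{\alpha,\beta}\lambda^{\alpha\beta}(\partial_\alpha h_\beta+\partial_\beta h_\alpha-\delta g_{\alpha\beta})=0$. *)

theory Defs
  imports "HOL-Analysis.Analysis"
begin

definition pd :: "(real^'m \<Rightarrow> 'b::real_normed_vector) \<Rightarrow> 'm \<Rightarrow> real^'m \<Rightarrow> 'b" where
  "pd f \<alpha> x = frechet_derivative f (at x) (axis \<alpha> 1)"

definition pd2 :: "(real^'m \<Rightarrow> 'b::real_normed_vector) \<Rightarrow> 'm \<Rightarrow> 'm \<Rightarrow> real^'m \<Rightarrow> 'b" where
  "pd2 f \<alpha> \<beta> x = pd (pd f \<beta>) \<alpha> x"

fun Ck :: "nat \<Rightarrow> (real^'m \<Rightarrow> 'b::real_normed_vector) \<Rightarrow> bool" where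
  "Ck 0 f = continuous_on UNIV f"
| "Ck (Suc k) f = (f differentiable_on UNIV \<and> (\<forall>\<alpha>. Ck k (pd f \<alpha>)))"

definition smooth :: "(real^'m \<Rightarrow> 'b::real_normed_vector) \<Rightarrow> bool" where
  "smooth f = (\<forall>k. Ck k f)"

definition vd :: "(real \<Rightarrow> 'b::real_normed_vector) \<Rightarrow> real \<Rightarrow> 'b" where
  "vd g t = vector_derivative g (at t)"

fun Ck1 :: "nat \<Rightarrow> (real \<Rightarrow> 'b::real_normed_vector) \<Rightarrow> bool" where
  "Ck1 0 g = continuous_on UNIV g"
| "Ck1 (Suc k) g = (g differentiable_on UNIV \<and> Ck1 k (vd g))"

definition smooth1 :: "(real \<Rightarrow> 'b::real_normed_vector) \<Rightarrow> bool" where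
  "smooth1 g = (\<forall>k. Ck1 k g)"

definition free_curve :: "(real \<Rightarrow> real^2) \<Rightarrow> bool" where
  "free_curve g = (smooth1 g \<and>
     (\<forall>t. vd g t \<noteq> vd (vd g) t \<and> independent {vd g t, vd (vd g) t}))"

definition rel_at :: "(real^'m \<Rightarrow> real^'q) \<Rightarrow> real^'m \<Rightarrow> ('m \<Rightarrow> real) \<Rightarrow> ('m \<Rightarrow> 'm \<Rightarrow> real) \<Rightarrow> bool" where
  "rel_at f x lam1 lam2 =
     ((\<forall>\<alpha> \<beta>. lam2 \<alpha> \<beta> = lam2 \<beta> \<alpha>) \<and>
      \<not> ((\<forall>\<alpha>. lam1 \<alpha> = 0) \<and> (\<forall>\<alpha> \<beta>. lam2 \<alpha> \<beta> = 0)) \<and>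
      (\<Sum>\<alpha>\<in>UNIV. lam1 \<alpha> *\<^sub>R pd f \<alpha> x)
        + (\<Sum>\<alpha>\<in>UNIV. \<Sum>\<beta>\<in>UNIV. lam2 \<alpha> \<beta> *\<^sub>R pd2 f \<alpha> \<beta> x) = 0)"

text \<open>The class A_{m,q}, q = m(m+3)/2 - 1.  Since the relation is unique up to a
  nonzero factor, condition (ii) is stated for every nontrivial relation at each point.\<close>
definition A_class :: "(real^'m \<Rightarrow> real^'q) \<Rightarrow> bool" where
  "A_class f =
     (CARD('q) = CARD('m) * (CARD('m) + 3) div 2 - 1 \<and>
      smooth f \<and>
      (\<forall>x. span (range (\<lambda>\<alpha>. pd f \<alpha> x) \<union> {pd2 f \<alpha> \<beta> x | \<alpha> \<beta>. True}) = UNIV) \<and>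
      (\<exists>\<alpha>0. \<forall>x lam1 lam2. rel_at f x lam1 lam2 \<longrightarrow> (\<exists>\<beta>. lam2 \<alpha>0 \<beta> \<noteq> 0)))"

definition compat_expr :: "real^'m \<Rightarrow> ('m \<Rightarrow> real) \<Rightarrow> ('m \<Rightarrow> 'm \<Rightarrow> real)
     \<Rightarrow> (real^'m \<Rightarrow> real^'m) \<Rightarrow> (real^'m \<Rightarrow> real^'m^'m) \<Rightarrow> real" where
  "compat_expr x lam1 lam2 h dg =
     2 * (\<Sum>\<alpha>\<in>UNIV. lam1 \<alpha> * h x $ \<alpha>)
     + (\<Sum>\<alpha>\<in>UNIV. \<Sum>\<beta>\<in>UNIV. lam2 \<alpha> \<beta> *
          (pd (\<lambda>p. h p $ \<beta>) \<alpha> x + pd (\<lambda>p. h p $ \<alpha>) \<beta> x - dg x $ \<alpha> $ \<beta>))"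

definition F_gh :: "(real \<Rightarrow> real^2) \<Rightarrow> (real \<Rightarrow> real^2) \<Rightarrow> real^2 \<Rightarrow> real^4" where
  "F_gh g h p = vector [g (p$1) $ 1, g (p$1) $ 2, h (p$2) $ 1, h (p$2) $ 2]"

end

theory Submission
  imports Defs
begin


lemma vector_4 [simp]:
 "(vector [a,b,c,d] ::('a::zero)^4)$1 = a"
 "(vector [a,b,c,d] ::('a::zero)^4)$2 = b"
 "(vector [a,b,c,d] ::('a::zero)^4)$3 = c"
 "(vector [a,b,c,d] ::('a::zero)^4)$4 = d"
  unfolding vector_def by simp_all

definition L1 :: "real^2 \<Rightarrow> real^4" where "L1 u = vector [u$1, u$2, 0, 0]"
definition L2 :: "real^2 \<Rightarrow> real^4" where "L2 u = vector [0, 0, u$1, u$2]"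

lemma lin_L1: "bounded_linear L1"
proof -
  have "linear L1" by (rule linearI) (auto simp: L1_def vec_eq_iff forall_4)
  thus ?thesis by (simp add: linear_conv_bounded_linear)
qed
lemma lin_L2: "bounded_linear L2"
proof -
  have "linear L2" by (rule linearI) (auto simp: L2_def vec_eq_iff forall_4)
  thus ?thesis by (simp add: linear_conv_bounded_linear)
qed

lemma F_gh_L: "F_gh a b p = L1 (a (p$1)) + L2 (b (p$2))"
  by (simp add: F_gh_def L1_def L2_def vec_eq_iff forall_4)

lemma curve_deriv:
  assumes "a differentiable_on UNIV"
  shows "((\<lambda>p::real^2. a (p$i)) has_derivative (\<lambda>v. (v$i) *\<^sub>R vd a (p$i))) (at p)"
proof -
  have "(a has_vector_derivative vd a (p$i)) (at (p$i))"
    using assms unfolding vd_def differentiable_on_def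
    by (simp add: vector_derivative_works[symmetric])
  hence d: "(a has_derivative (\<lambda>h. h *\<^sub>R vd a (p$i))) (at (p$i))"
    by (simp add: has_vector_derivative_def)
  have "((\<lambda>p::real^2. p$i) has_derivative (\<lambda>v. v$i)) (at p)"
    by (rule bounded_linear_imp_has_derivative) (rule bounded_linear_vec_nth)
  from has_derivative_compose[OF this d] show ?thesis by (simp add: o_def)
qed

lemma F_deriv:
  assumes "a differentiable_on UNIV" "b differentiable_on UNIV"
  shows "(F_gh a b has_derivative (\<lambda>v. L1 ((v$1) *\<^sub>R vd a (p$1)) + L2 ((v$2) *\<^sub>R vd b (p$2)))) (at p)"
  unfolding F_gh_L[abs_def]
  by (intro has_derivative_add bounded_linear.has_derivative[OF lin_L1] bounded_linear.has_derivative[OF lin_L2] curve_deriv assms)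

lemma pd_F1:
  assumes "a differentiable_on UNIV" "b differentiable_on UNIV"
  shows "pd (F_gh a b) 1 = F_gh (vd a) (\<lambda>_. 0)"
proof
  fix p
  show "pd (F_gh a b) 1 p = F_gh (vd a) (\<lambda>_. 0) p"
    unfolding pd_def frechet_derivative_at[OF F_deriv[OF assms, of p], symmetric]
    by (simp add: F_gh_L linear_simps(3)[OF lin_L2] axis_def)
qed

lemma pd_F2:
  assumes "a differentiable_on UNIV" "b differentiable_on UNIV"
  shows "pd (F_gh a b) 2 = F_gh (\<lambda>_. 0) (vd b)"
proof
  fix p
  show "pd (F_gh a b) 2 p = F_gh (\<lambda>_. 0) (vd b) p"
    unfolding pd_def frechet_derivative_at[OF F_deriv[OF assms, of p], symmetric]
    by (simp add: F_gh_L linear_simps(3)[OF lin_L1] axis_def)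
qed

lemma vd_zero: "vd (\<lambda>_. 0) = (\<lambda>_. 0)"
  by (simp add: vd_def fun_eq_iff)

lemma smooth1_zero: "smooth1 (\<lambda>_. 0)"
proof -
  have "Ck1 k (\<lambda>_::real. 0::'a::real_normed_vector)" for k
    by (induction k) (simp_all add: vd_zero)
  thus ?thesis by (simp add: smooth1_def)
qed

lemma smooth1_vd: "smooth1 a \<Longrightarrow> smooth1 (vd a)"
  unfolding smooth1_def by (metis Ck1.simps(2))

lemma smooth1_diff: "smooth1 a \<Longrightarrow> a differentiable_on UNIV"
  unfolding smooth1_def by (metis Ck1.simps(2))

lemma F_smooth: "smooth1 a \<Longrightarrow> smooth1 b \<Longrightarrow> smooth (F_gh a b)"
proof -
  have "\<forall>a b. smooth1 a \<longrightarrow> smooth1 b \<longrightarrow> Ck k (F_gh a b)" for k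
  proof (induction k)
    case 0
    show ?case
    proof (intro allI impI)
      fix a b :: "real \<Rightarrow> real^2" assume "smooth1 a" "smooth1 b"
      hence "\<forall>p. F_gh a b differentiable (at p)"
        using F_deriv smooth1_diff differentiable_def by blast
      thus "Ck 0 (F_gh a b)"
        by (simp add: differentiable_imp_continuous_within continuous_at_imp_continuous_on)
    qed
  next
    case (Suc k)
    show ?case
    proof (intro allI impI)
      fix a b :: "real \<Rightarrow> real^2" assume h: "smooth1 a" "smooth1 b"
      hence "\<forall>p. F_gh a b differentiable (at p)"
        using F_deriv smooth1_diff differentiable_def by blast
      hence "F_gh a b differentiable_on UNIV"
        by (simp add: differentiable_at_imp_differentiable_on)
      moreover have "Ck k (pd (F_gh a b) \<alpha>)" for \<alpha>
      proof (rule disjE[OF exhaust_2[of \<alpha>]])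
        assume "\<alpha> = 1" thus ?thesis using Suc h
          by (simp add: pd_F1 smooth1_diff smooth1_vd smooth1_zero)
      next
        assume "\<alpha> = 2" thus ?thesis using Suc h
          by (simp add: pd_F2 smooth1_diff smooth1_vd smooth1_zero)
      qed
      ultimately show "Ck (Suc k) (F_gh a b)" by simp
    qed
  qed
  thus "smooth1 a \<Longrightarrow> smooth1 b \<Longrightarrow> smooth (F_gh a b)" by (simp add: smooth_def)
qed



lemma indep_iff:
  fixes u v :: "real^2"
  assumes "u \<noteq> v"
  shows "independent {u, v} \<longleftrightarrow> u$1 * v$2 - u$2 * v$1 \<noteq> 0"
proof -
  have "independent {u,v} \<longleftrightarrow> v \<noteq> 0 \<and> (\<forall>k. u \<noteq> k *\<^sub>R v)"
    using assms by (auto simp: independent_insert span_singleton)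
  also have "\<dots> \<longleftrightarrow> u$1 * v$2 - u$2 * v$1 \<noteq> 0"
  proof
    assume h: "v \<noteq> 0 \<and> (\<forall>k. u \<noteq> k *\<^sub>R v)"
    show "u$1 * v$2 - u$2 * v$1 \<noteq> 0"
    proof
      assume d: "u$1 * v$2 - u$2 * v$1 = 0"
      show False
      proof (cases "v$1 = 0")
        case True
        with h have "v$2 \<noteq> 0" by (auto simp: vec_eq_iff forall_2)
        with d True have "u = (u$2/v$2) *\<^sub>R v" by (auto simp: vec_eq_iff forall_2)
        with h show False by blast
      next
        case False
        with d have "u = (u$1/v$1) *\<^sub>R v"
          by (auto simp: vec_eq_iff forall_2 field_simps)
        with h show False by blast
      qed
    qed
  next
    assume d: "u$1 * v$2 - u$2 * v$1 \<noteq> 0"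
    show "v \<noteq> 0 \<and> (\<forall>k. u \<noteq> k *\<^sub>R v)"
      using d by auto
  qed
  finally show ?thesis .
qed



lemma solve2:
  fixes a b u1 u2 v1 v2 :: real
  assumes "a*u1 + b * v1 = 0" "a*u2 + b * v2 = 0" "u1 * v2 - u2 * v1 \<noteq> 0"
  shows "a = 0 \<and> b = 0"
proof -
  have "a*(u1 * v2 - u2 * v1) = v2*(a*u1 + b * v1) - v1*(a*u2 + b * v2)" by algebra
  hence "a = 0" using assms by simp
  moreover have "b*(u1 * v2 - u2 * v1) = u1*(a*u2 + b * v2) - u2*(a*u1 + b * v1)" by algebra
  hence "b = 0" using assms by simp
  ultimately show ?thesis by simp
qed

lemma Fz: "F_gh (\<lambda>_. 0) (\<lambda>_. 0) = (\<lambda>_. 0)"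
  by (simp add: fun_eq_iff F_gh_def vec_eq_iff forall_4)

lemma main_part:
  fixes g h :: "real \<Rightarrow> real^2"
  assumes fg: "free_curve g" and fh: "free_curve h"
  shows "A_class (F_gh g h)
    \<and> (\<forall>x lam1 lam2 (k :: real^2 \<Rightarrow> real^2) (dg :: real^2 \<Rightarrow> real^2^2).
          rel_at (F_gh g h) x lam1 lam2
          \<longrightarrow> (\<forall>\<alpha>. (\<lambda>p. k p $ \<alpha>) differentiable (at x))
          \<longrightarrow> (\<forall>\<alpha> \<beta>. dg x $ \<alpha> $ \<beta> = dg x $ \<beta> $ \<alpha>)
          \<longrightarrow> (compat_expr x lam1 lam2 k dg = 0 \<longleftrightarrow>
               pd (\<lambda>p. k p $ 2) 1 x + pd (\<lambda>p. k p $ 1) 2 x = dg x $ 1 $ 2))"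
proof -
  define z :: "real \<Rightarrow> real^2" where "z = (\<lambda>_. 0)"
  define F where "F = F_gh g h"
  have sg: "smooth1 g" and sh: "smooth1 h" using fg fh by (simp_all add: free_curve_def)
  have sz: "smooth1 z" by (simp add: z_def smooth1_zero)
  note D = smooth1_diff smooth1_vd
  have p1: "pd F 1 = F_gh (vd g) z" unfolding F_def z_def using sg sh by (simp add: pd_F1 D)
  have p2: "pd F 2 = F_gh z (vd h)" unfolding F_def z_def using sg sh by (simp add: pd_F2 D)
  have p11: "pd2 F 1 1 = F_gh (vd (vd g)) z" using sg sz
    unfolding pd2_def p1 by (simp add: pd_F1 D z_def[symmetric])
  have p22: "pd2 F 2 2 = F_gh z (vd (vd h))" using sh sz
    unfolding pd2_def p2 by (simp add: pd_F2 D z_def[symmetric])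
  have p12: "pd2 F 1 2 = (\<lambda>_. 0)" using sh sz
    unfolding pd2_def p2 by (simp add: pd_F1 D z_def vd_zero Fz)
  have p21: "pd2 F 2 1 = (\<lambda>_. 0)" using sg sz
    unfolding pd2_def p1 by (simp add: pd_F2 D z_def vd_zero Fz)
  have detg: "vd g t $ 1 * vd (vd g) t $ 2 - vd g t $ 2 * vd (vd g) t $ 1 \<noteq> 0" for t
    using fg indep_iff unfolding free_curve_def by blast
  have deth: "vd h t $ 1 * vd (vd h) t $ 2 - vd h t $ 2 * vd (vd h) t $ 1 \<noteq> 0" for t
    using fh indep_iff unfolding free_curve_def by blast
  have span: "span (range (\<lambda>\<alpha>. pd F \<alpha> x) \<union> {pd2 F \<alpha> \<beta> x | \<alpha> \<beta>. True}) = UNIV" for x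
  proof -
    let ?S = "range (\<lambda>\<alpha>. pd F \<alpha> x) \<union> {pd2 F \<alpha> \<beta> x | \<alpha> \<beta>. True}"
    have i: "pd F 1 x \<in> ?S" "pd F 2 x \<in> ?S" "pd2 F 1 1 x \<in> ?S" "pd2 F 2 2 x \<in> ?S" by blast+
    show ?thesis
    proof (rule set_eqI, rule iffI, simp)
      fix w :: "real^4"
      define u where "u = vd g (x$1)"
      define v where "v = vd (vd g) (x$1)"
      define u' where "u' = vd h (x$2)"
      define v' where "v' = vd (vd h) (x$2)"
      define d where "d = u$1 * v$2 - u$2 * v$1"
      define d' where "d' = u'$1 * v'$2 - u'$2 * v'$1"
      have dn: "d \<noteq> 0" "d' \<noteq> 0" using detg deth unfolding d_def d'_def u_def v_def u'_def v'_def by auto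
      define a where "a = (w$1 * v$2 - w$2 * v$1) / d"
      define b where "b = (u$1 * w$2 - u$2 * w$1) / d"
      define c where "c = (w$3 * v'$2 - w$4 * v'$1) / d'"
      define e where "e = (u'$1 * w$4 - u'$2 * w$3) / d'"
      have ad: "a * d = w$1 * v$2 - w$2 * v$1" and bd: "b * d = u$1 * w$2 - u$2 * w$1"
        using dn unfolding a_def b_def by simp_all
      have cd: "c * d' = w$3 * v'$2 - w$4 * v'$1" and ed: "e * d' = u'$1 * w$4 - u'$2 * w$3"
        using dn unfolding c_def e_def by simp_all
      have "(a * u$1 + b * v$1) * d = (a * d) * u$1 + (b * d) * v$1"
        by (simp add: algebra_simps)
      also have "\<dots> = w$1 * d" unfolding ad bd unfolding d_def by algebra
      finally have "(a * u$1 + b * v$1) * d = w$1 * d" .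
      hence c1: "a * u$1 + b * v$1 = w$1" using dn by simp
      have "(a * u$2 + b * v$2) * d = (a * d) * u$2 + (b * d) * v$2"
        by (simp add: algebra_simps)
      also have "\<dots> = w$2 * d" unfolding ad bd unfolding d_def by algebra
      finally have "(a * u$2 + b * v$2) * d = w$2 * d" .
      hence c2: "a * u$2 + b * v$2 = w$2" using dn by simp
      have "(c * u'$1 + e * v'$1) * d' = (c * d') * u'$1 + (e * d') * v'$1"
        by (simp add: algebra_simps)
      also have "\<dots> = w$3 * d'" unfolding cd ed unfolding d'_def by algebra
      finally have "(c * u'$1 + e * v'$1) * d' = w$3 * d'" .
      hence c3: "c * u'$1 + e * v'$1 = w$3" using dn by simp
      have "(c * u'$2 + e * v'$2) * d' = (c * d') * u'$2 + (e * d') * v'$2"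
        by (simp add: algebra_simps)
      also have "\<dots> = w$4 * d'" unfolding cd ed unfolding d'_def by algebra
      finally have "(c * u'$2 + e * v'$2) * d' = w$4 * d'" .
      hence c4: "c * u'$2 + e * v'$2 = w$4" using dn by simp
      have "w = a *\<^sub>R pd F 1 x + b *\<^sub>R pd2 F 1 1 x + c *\<^sub>R pd F 2 x + e *\<^sub>R pd2 F 2 2 x"
        unfolding p1 p2 p11 p22
        by (simp add: F_gh_def vec_eq_iff forall_4 z_def
             u_def[symmetric] v_def[symmetric] u'_def[symmetric] v'_def[symmetric] c1 c2 c3 c4)
      moreover have "a *\<^sub>R pd F 1 x + b *\<^sub>R pd2 F 1 1 x + c *\<^sub>R pd F 2 x + e *\<^sub>R pd2 F 2 2 x \<in> span ?S"
        by (intro span_add span_mul span_base i)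
      ultimately show "w \<in> span ?S" by simp
    qed
  qed
  have rel: "lam1 1 = 0 \<and> lam1 2 = 0 \<and> lam2 1 1 = 0 \<and> lam2 2 2 = 0 \<and> lam2 1 2 = lam2 2 1 \<and> lam2 1 2 \<noteq> 0"
    if r: "rel_at F x lam1 lam2" for x lam1 lam2
  proof -
    have sym: "lam2 1 2 = lam2 2 1" using r unfolding rel_at_def by blast
    have E: "lam1 1 *\<^sub>R F_gh (vd g) z x + lam1 2 *\<^sub>R F_gh z (vd h) x
           + lam2 1 1 *\<^sub>R F_gh (vd (vd g)) z x + lam2 2 2 *\<^sub>R F_gh z (vd (vd h)) x = 0"
      using r unfolding rel_at_def sum_2 p1 p2 p11 p22 p12 p21 by (simp add: algebra_simps)
    hence e1: "lam1 1 * vd g (x$1) $ 1 + lam2 1 1 * vd (vd g) (x$1) $ 1 = 0"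
      and e2: "lam1 1 * vd g (x$1) $ 2 + lam2 1 1 * vd (vd g) (x$1) $ 2 = 0"
      and e3: "lam1 2 * vd h (x$2) $ 1 + lam2 2 2 * vd (vd h) (x$2) $ 1 = 0"
      and e4: "lam1 2 * vd h (x$2) $ 2 + lam2 2 2 * vd (vd h) (x$2) $ 2 = 0"
      by (simp_all add: F_gh_def vec_eq_iff forall_4 z_def)
    have a: "lam1 1 = 0 \<and> lam2 1 1 = 0" using solve2[OF e1 e2 detg] .
    have b: "lam1 2 = 0 \<and> lam2 2 2 = 0" using solve2[OF e3 e4 deth] .
    have "lam2 1 2 \<noteq> 0"
    proof
      assume "lam2 1 2 = 0"
      hence "(\<forall>\<alpha>. lam1 \<alpha> = 0) \<and> (\<forall>\<alpha> \<beta>. lam2 \<alpha> \<beta> = 0)"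
        using a b sym by (auto simp: forall_2)
      thus False using r unfolding rel_at_def by blast
    qed
    thus ?thesis using a b sym by simp
  qed
  have A: "A_class F"
    unfolding A_class_def
  proof (intro conjI)
    show "CARD(4) = CARD(2) * (CARD(2) + 3) div 2 - 1" by simp
    show "smooth F" unfolding F_def by (rule F_smooth[OF sg sh])
    show "\<forall>x. span (range (\<lambda>\<alpha>. pd F \<alpha> x) \<union> {pd2 F \<alpha> \<beta> x | \<alpha> \<beta>. True}) = UNIV" using span by blast
    show "\<exists>\<alpha>0. \<forall>x lam1 lam2. rel_at F x lam1 lam2 \<longrightarrow> (\<exists>\<beta>. lam2 \<alpha>0 \<beta> \<noteq> 0)"
      using rel by blast
  qed
  have C: "compat_expr x lam1 lam2 k dg = 0 \<longleftrightarrow>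
               pd (\<lambda>p. k p $ 2) 1 x + pd (\<lambda>p. k p $ 1) 2 x = dg x $ 1 $ 2"
    if r: "rel_at F x lam1 lam2" and s: "\<forall>\<alpha> \<beta>. dg x $ \<alpha> $ \<beta> = dg x $ \<beta> $ \<alpha>"
    for x lam1 lam2 k and dg :: "real^2 \<Rightarrow> real^2^2"
  proof -
    from rel[OF r] have l: "lam1 1 = 0" "lam1 2 = 0" "lam2 1 1 = 0" "lam2 2 2 = 0"
      "lam2 2 1 = lam2 1 2" "lam2 1 2 \<noteq> 0" by auto
    have "compat_expr x lam1 lam2 k dg = 2 * lam2 1 2 *
        (pd (\<lambda>p. k p $ 2) 1 x + pd (\<lambda>p. k p $ 1) 2 x - dg x $ 1 $ 2)"
      unfolding compat_expr_def sum_2 l(1-5) using s by (simp add: algebra_simps)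
    thus ?thesis using l(6) by simp
  qed
  show ?thesis using A C unfolding F_def by blast
qed



definition P :: "real \<Rightarrow> real \<Rightarrow> real \<Rightarrow> real^2" where
  "P a b t = vector [a*t + b, exp t]"

lemma P_alt: "P a b = (\<lambda>t. (a*t + b) *\<^sub>R axis 1 1 + exp t *\<^sub>R axis 2 1)"
  by (auto simp: fun_eq_iff P_def vec_eq_iff forall_2 axis_def)

lemma P_deriv: "(P a b has_vector_derivative P 0 a t) (at t)"
proof -
  have "((\<lambda>t. (a*t + b) *\<^sub>R axis 1 1 + exp t *\<^sub>R axis 2 1) has_vector_derivative
        (a *\<^sub>R axis 1 1 + exp t *\<^sub>R axis 2 1)) (at t)"
    by (auto intro!: derivative_eq_intros)
  thus ?thesis by (simp add: P_alt)
qed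

lemma vd_P: "vd (P a b) = P 0 a"
  using P_deriv by (auto simp: fun_eq_iff vd_def intro: vector_derivative_at)

lemma smooth_P: "smooth1 (P a b)"
proof -
  have dP: "P a b differentiable at t" for a b t
    using P_deriv[of a b t] unfolding has_vector_derivative_def differentiable_def by blast
  have dO: "P a b differentiable_on UNIV" for a b
    using dP by (simp add: differentiable_at_imp_differentiable_on)
  have "\<forall>a b. Ck1 k (P a b)" for k
  proof (induction k)
    case 0 show ?case using dO by (simp add: differentiable_imp_continuous_on)
  next
    case (Suc k) thus ?case using dO by (simp add: vd_P)
  qed
  thus ?thesis by (simp add: smooth1_def)
qed

lemma free_P: "free_curve (P 1 0)"
  unfolding free_curve_def
proof (intro conjI allI)
  show "smooth1 (P 1 0)" by (rule smooth_P)
  fix t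
  show ne: "vd (P 1 0) t \<noteq> vd (vd (P 1 0)) t" by (simp add: vd_P P_def vec_eq_iff forall_2)
  show "independent {vd (P 1 0) t, vd (vd (P 1 0)) t}"
    using indep_iff[OF ne] by (simp add: vd_P P_def)
qed

lemma exp_F: "(\<lambda>p :: real^2. vector [p$1, exp (p$1), p$2, exp (p$2)] :: real^4) = F_gh (P 1 0) (P 1 0)"
  by (simp add: fun_eq_iff F_gh_def P_def)


theorem mainTheorem2:
  fixes g h :: "real \<Rightarrow> real^2"
  assumes "free_curve g" and "free_curve h"
  shows "A_class (F_gh g h)
    \<and> (\<forall>x lam1 lam2 (k :: real^2 \<Rightarrow> real^2) (dg :: real^2 \<Rightarrow> real^2^2).
          rel_at (F_gh g h) x lam1 lam2
          \<longrightarrow> (\<forall>\<alpha>. (\<lambda>p. k p $ \<alpha>) differentiable (at x))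
          \<longrightarrow> (\<forall>\<alpha> \<beta>. dg x $ \<alpha> $ \<beta> = dg x $ \<beta> $ \<alpha>)
          \<longrightarrow> (compat_expr x lam1 lam2 k dg = 0 \<longleftrightarrow>
               pd (\<lambda>p. k p $ 2) 1 x + pd (\<lambda>p. k p $ 1) 2 x = dg x $ 1 $ 2))
    \<and> A_class (\<lambda>p :: real^2. vector [p$1, exp (p$1), p$2, exp (p$2)] :: real^4)"
proof -
  have "A_class (F_gh (P 1 0) (P 1 0))" using main_part[OF free_P free_P] by blast
  thus ?thesis using main_part[OF assms] exp_F by simp
qed

end
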